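(* Let $k\ge 0$ and let $P_{4k+2}$ be the path with vertices labeled $1,2,\dots,4k+2$ consecutively. Then $\tau(P_{4k+2})=(k+1)^2$, and for each vertex $v$, writing $v=4q+r$ with $0\le r<4$, $$TDV(v)=\begin{cases}(k+1)q & \text{if } v\equiv 0 \pmod 4,\\ (k+1)(q+1) & \text{if } v\equiv 1 \pmod 4,\\ (k+1)(k+1-q) & \text{if } v\equiv 2 \pmod 4,\\ (k+1)(k-q) & \text{if } v\equiv 3 \pmod 4.\end{cases}$$
   Context: A set $D \subseteq V(G)$ is a total dominating set of a graph $G$ if every vertex of $G$ has a neighbor in $D$. $\gamma_t(G)$ is the minimum cardinality of a total dominating set; a minimum one is a $\gamma_t(G)$-set. $\tau(G)$ is the number of $\gamma_t(G)$-sets and $TDV(v)$ is the number of $\gamma_t(P_{4k+2})$-sets containing $v$. *)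

theory Defs
  imports Main
begin

definition path_vertices :: "nat \<Rightarrow> nat set" where
  "path_vertices n = {1..n}"

definition path_adj :: "nat \<Rightarrow> nat \<Rightarrow> bool" where
  "path_adj u v \<longleftrightarrow> u + 1 = v \<or> v + 1 = u"

definition is_total_dominating_set :: "'a set \<Rightarrow> ('a \<Rightarrow> 'a \<Rightarrow> bool) \<Rightarrow> 'a set \<Rightarrow> bool" where
  "is_total_dominating_set V E D \<longleftrightarrow> D \<subseteq> V \<and> (\<forall>v\<in>V. \<exists>u\<in>D. E v u)"

definition total_domination_number :: "'a set \<Rightarrow> ('a \<Rightarrow> 'a \<Rightarrow> bool) \<Rightarrow> nat" where
  "total_domination_number V E = (LEAST m. \<exists>D. is_total_dominating_set V E D \<and> card D = m)"

definition gamma_t_sets :: "'a set \<Rightarrow> ('a \<Rightarrow> 'a \<Rightarrow> bool) \<Rightarrow> 'a set set" where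
  "gamma_t_sets V E = {D. is_total_dominating_set V E D \<and> card D = total_domination_number V E}"

definition tau :: "'a set \<Rightarrow> ('a \<Rightarrow> 'a \<Rightarrow> bool) \<Rightarrow> nat" where
  "tau V E = card (gamma_t_sets V E)"

definition TDV :: "'a set \<Rightarrow> ('a \<Rightarrow> 'a \<Rightarrow> bool) \<Rightarrow> 'a \<Rightarrow> nat" where
  "TDV V E v = card {D \<in> gamma_t_sets V E. v \<in> D}"

end

theory Submission
  imports Defs
begin

definition Dset :: "nat \<Rightarrow> nat \<Rightarrow> nat \<Rightarrow> nat set" where
  "Dset k p t = {v. (v mod 4 = 2 \<and> v \<le> 4*p+2) \<or> (v mod 4 = 0 \<and> 4*p+4 \<le> v \<and> v \<le> 4*k)
     \<or> (v mod 4 = 3 \<and> v < 4*t) \<or> (v mod 4 = 1 \<and> 4*t+1 \<le> v \<and> v \<le> 4*k+1)}"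

definition gg :: "nat \<Rightarrow> nat \<times> nat" where
  "gg v = (v mod 2, v div 4)"

lemma mod4_cases:
  fixes v :: nat
  obtains q where "v = 4*q" | q where "v = 4*q+1" | q where "v = 4*q+2" | q where "v = 4*q+3"
proof -
  have d: "v = 4*(v div 4) + v mod 4" by simp
  have "v mod 4 < 4" by simp
  then consider "v mod 4 = 0" | "v mod 4 = 1" | "v mod 4 = 2" | "v mod 4 = 3" by linarith
  then show ?thesis
  proof cases
    case 1 then show ?thesis using that(1)[of "v div 4"] d by linarith
  next
    case 2 then show ?thesis using that(2)[of "v div 4"] d by linarith
  next
    case 3 then show ?thesis using that(3)[of "v div 4"] d by linarith
  next
    case 4 then show ?thesis using that(4)[of "v div 4"] d by linarith
  qed
qed

lemma m1: "(4*q+1::nat) mod 4 = 1" by presburger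
lemma m2: "(4*q+2::nat) mod 4 = 2" by presburger
lemma m3: "(4*q+3::nat) mod 4 = 3" by presburger
lemma m0: "(4*q::nat) mod 4 = 0" by presburger
lemma d1: "(4*q+1::nat) div 4 = q" by presburger
lemma d2: "(4*q+2::nat) div 4 = q" by presburger
lemma d3: "(4*q+3::nat) div 4 = q" by presburger
lemma d0: "(4*q::nat) div 4 = q" by presburger
lemma e1: "(4*q+1::nat) mod 2 = 1" by presburger
lemma e2: "(4*q+2::nat) mod 2 = 0" by presburger
lemma e3: "(4*q+3::nat) mod 2 = 1" by presburger
lemma e0: "(4*q::nat) mod 2 = 0" by presburger

lemma gg0: "gg (4*q) = (0,q)" by (simp only: gg_def e0 d0)
lemma gg1: "gg (4*q+1) = (1,q)" by (simp only: gg_def e1 d1)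
lemma gg2: "gg (4*q+2) = (0,q)" by (simp only: gg_def e2 d2)
lemma gg3: "gg (4*q+3) = (1,q)" by (simp only: gg_def e3 d3)

lemma Dset0: "4*q \<in> Dset k p t \<longleftrightarrow> p < q \<and> q \<le> k"
  unfolding Dset_def mem_Collect_eq m0 by arith
lemma Dset1: "4*q+1 \<in> Dset k p t \<longleftrightarrow> t \<le> q \<and> q \<le> k"
  unfolding Dset_def mem_Collect_eq m1 by arith
lemma Dset2: "4*q+2 \<in> Dset k p t \<longleftrightarrow> q \<le> p"
  unfolding Dset_def mem_Collect_eq m2 by arith
lemma Dset3: "4*q+3 \<in> Dset k p t \<longleftrightarrow> q < t"
  unfolding Dset_def mem_Collect_eq m3 by arith


lemma nb:
  assumes "is_total_dominating_set {1..n} path_adj D" "a+1 \<le> n"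
  shows "a \<in> D \<or> a+2 \<in> D"
proof -
  have "a+1 \<in> {1..n}" using assms(2) by simp
  then obtain u where "u \<in> D" "path_adj (a+1) u"
    using assms(1) unfolding is_total_dominating_set_def by blast
  then have "u = a+2 \<or> u = a" unfolding path_adj_def by arith
  then show ?thesis using \<open>u \<in> D\<close> by blast
qed

lemma Dset_sub:
  assumes "p \<le> k" "t \<le> k"
  shows "Dset k p t \<subseteq> {1..4*k+2}"
proof
  fix x assume x: "x \<in> Dset k p t"
  show "x \<in> {1..4*k+2}"
  proof (cases x rule: mod4_cases)
    case (1 q) then show ?thesis using x Dset0[of q k p t] by auto
  next
    case (2 q) then show ?thesis using x Dset1[of q k p t] by auto
  next
    case (3 q) then show ?thesis using x Dset2[of q k p t] assms by auto
  next
    case (4 q) then show ?thesis using x Dset3[of q k p t] assms by auto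
  qed
qed

lemma Dset_tds:
  assumes "p \<le> k" "t \<le> k"
  shows "is_total_dominating_set (path_vertices (4*k+2)) path_adj (Dset k p t)"
  unfolding is_total_dominating_set_def path_vertices_def
proof (intro conjI ballI)
  show "Dset k p t \<subseteq> {1..4*k+2}" using Dset_sub[OF assms] .
  fix v assume v: "v \<in> {1..4*k+2}"
  show "\<exists>u\<in>Dset k p t. path_adj v u"
  proof (cases v rule: mod4_cases)
    case (1 q)
    then obtain q' where q': "q = Suc q'" using v by (cases q) auto
    have "q \<le> k" using v 1 by auto
    show ?thesis
    proof (cases "q \<le> t")
      case True
      then have "4*q'+3 \<in> Dset k p t" using Dset3[of q' k p t] q' by simp
      moreover have "path_adj v (4*q'+3)" using 1 q' unfolding path_adj_def by simp
      ultimately show ?thesis by blast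
    next
      case False
      then have "4*q+1 \<in> Dset k p t" using Dset1[of q k p t] \<open>q \<le> k\<close> by simp
      moreover have "path_adj v (4*q+1)" using 1 unfolding path_adj_def by simp
      ultimately show ?thesis by blast
    qed
  next
    case (2 q)
    then have "q \<le> k" using v by auto
    show ?thesis
    proof (cases "q \<le> p")
      case True
      then have "4*q+2 \<in> Dset k p t" using Dset2[of q k p t] by simp
      moreover have "path_adj v (4*q+2)" using 2 unfolding path_adj_def by simp
      ultimately show ?thesis by blast
    next
      case False
      then have "4*q \<in> Dset k p t" using Dset0[of q k p t] \<open>q \<le> k\<close> by simp
      moreover have "path_adj v (4*q)" using 2 unfolding path_adj_def by simp
      ultimately show ?thesis by blast
    qed
  next
    case (3 q)
    then have "q \<le> k" using v by auto
    show ?thesis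
    proof (cases "t \<le> q")
      case True
      then have "4*q+1 \<in> Dset k p t" using Dset1[of q k p t] \<open>q \<le> k\<close> by simp
      moreover have "path_adj v (4*q+1)" using 3 unfolding path_adj_def by simp
      ultimately show ?thesis by blast
    next
      case False
      then have "4*q+3 \<in> Dset k p t" using Dset3[of q k p t] by simp
      moreover have "path_adj v (4*q+3)" using 3 unfolding path_adj_def by simp
      ultimately show ?thesis by blast
    qed
  next
    case (4 q)
    then have "q < k" using v by auto
    show ?thesis
    proof (cases "q \<le> p")
      case True
      then have "4*q+2 \<in> Dset k p t" using Dset2[of q k p t] by simp
      moreover have "path_adj v (4*q+2)" using 4 unfolding path_adj_def by simp
      ultimately show ?thesis by blast
    next
      case False
      then have "4*Suc q \<in> Dset k p t" using Dset0[of "Suc q" k p t] \<open>q < k\<close> by simp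
      moreover have "path_adj v (4*Suc q)" using 4 unfolding path_adj_def by simp
      ultimately show ?thesis by blast
    qed
  qed
qed

lemma lb_img:
  assumes "is_total_dominating_set {1..4*k+2} path_adj D"
  shows "gg ` D = {0,1} \<times> {..k}"
proof
  have sub: "D \<subseteq> {1..4*k+2}" using assms unfolding is_total_dominating_set_def by blast
  show "gg ` D \<subseteq> {0,1} \<times> {..k}"
  proof
    fix y assume "y \<in> gg ` D"
    then obtain x where x: "x \<in> D" "y = gg x" by blast
    then have "x \<le> 4*k+2" using sub by auto
    then have "x div 4 \<le> k" by linarith
    moreover have "x mod 2 = 0 \<or> x mod 2 = 1" by auto
    ultimately show "y \<in> {0,1} \<times> {..k}" using x by (auto simp: gg_def)
  qed
  show "{0,1} \<times> {..k} \<subseteq> gg ` D"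
  proof
    fix y assume "y \<in> {0::nat,1} \<times> {..k}"
    then obtain a m where y: "y = (a,m)" "a = 0 \<or> a = 1" "m \<le> k" by auto
    show "y \<in> gg ` D"
    proof (cases "a = 0")
      case True
      have "4*m \<in> D \<or> 4*m+2 \<in> D" using nb[OF assms, of "4*m"] y by simp
      then show ?thesis using gg0[of m] gg2[of m] y True by (metis image_eqI)
    next
      case False
      have "4*m+1 \<in> D \<or> 4*m+1+2 \<in> D" using nb[OF assms, of "4*m+1"] y by simp
      moreover have "4*m+1+2 = 4*m+3" by simp
      ultimately show ?thesis using gg1[of m] gg3[of m] y False by (metis image_eqI)
    qed
  qed
qed

lemma card_prod: "card ({0::nat,1} \<times> {..k::nat}) = 2*k+2"
  by (simp add: card_cartesian_product)

lemma lb_card: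
  assumes "is_total_dominating_set {1..4*k+2} path_adj D"
  shows "2*k+2 \<le> card D"
proof -
  have "finite D" using assms unfolding is_total_dominating_set_def
    by (meson finite_atLeastAtMost finite_subset)
  then have "card (gg ` D) \<le> card D" by (rule card_image_le)
  then show ?thesis using lb_img[OF assms] card_prod by simp
qed

lemma Dset_mem: "v \<in> Dset k p t \<longleftrightarrow> (v mod 4 = 2 \<and> v div 4 \<le> p) \<or> (v mod 4 = 0 \<and> p < v div 4 \<and> v div 4 \<le> k)
   \<or> (v mod 4 = 3 \<and> v div 4 < t) \<or> (v mod 4 = 1 \<and> t \<le> v div 4 \<and> v div 4 \<le> k)"
proof -
  have d: "v = 4*(v div 4) + v mod 4" by simp
  have r: "v mod 4 < 4" by simp
  obtain q r where "q = v div 4" "r = v mod 4" by blast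
  then show ?thesis using d r unfolding Dset_def mem_Collect_eq by arith
qed

lemma inj_aux:
  assumes "u \<in> Dset k p t" "w \<in> Dset k p t" "u mod 2 = w mod 2" "u div 4 = w div 4"
  shows "u = w"
proof -
  have du: "u = 4*(u div 4) + u mod 4" and dw: "w = 4*(w div 4) + w mod 4" by simp_all
  have pu: "u mod 2 = u mod 4 mod 2" and pw: "w mod 2 = w mod 4 mod 2"
    by (simp_all add: mod_mod_cancel)
  have "u mod 4 < 4" "w mod 4 < 4" by simp_all
  then have cu: "u mod 4 = 0 \<or> u mod 4 = 1 \<or> u mod 4 = 2 \<or> u mod 4 = 3"
    and cw: "w mod 4 = 0 \<or> w mod 4 = 1 \<or> w mod 4 = 2 \<or> w mod 4 = 3" by linarith+
  have "u mod 4 = w mod 4"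
    using cu cw assms(1,2,3,4) pu pw unfolding Dset_mem by auto
  then show ?thesis using du dw assms(4) by simp
qed

lemma card_Dset:
  assumes "p \<le> k" "t \<le> k"
  shows "card (Dset k p t) = 2*k+2"
proof -
  have tds: "is_total_dominating_set {1..4*k+2} path_adj (Dset k p t)"
    using Dset_tds[OF assms] by (simp add: path_vertices_def)
  have "inj_on gg (Dset k p t)"
    by (rule inj_onI) (rule inj_aux, auto simp: gg_def)
  then have "card (Dset k p t) = card (gg ` Dset k p t)" by (simp add: card_image)
  then show ?thesis using lb_img[OF tds] card_prod by simp
qed


lemma threshold_up:
  assumes "P k" "\<And>m. m < k \<Longrightarrow> P m \<Longrightarrow> P (Suc m)"
  shows "\<exists>t\<le>k. \<forall>m\<le>k. P m \<longleftrightarrow> t \<le> m"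
proof -
  define t where "t = (LEAST m. P m)"
  have tk: "t \<le> k" unfolding t_def using assms(1) by (rule Least_le)
  have Pt: "P t" unfolding t_def using assms(1) by (rule LeastI)
  have up: "\<forall>m. t \<le> m \<longrightarrow> m \<le> k \<longrightarrow> P m"
  proof
    fix m show "t \<le> m \<longrightarrow> m \<le> k \<longrightarrow> P m"
    proof (induction m)
      case 0 then show ?case using Pt by auto
    next
      case (Suc m)
      show ?case
      proof (intro impI)
        assume a: "t \<le> Suc m" "Suc m \<le> k"
        show "P (Suc m)"
        proof (cases "t = Suc m")
          case True then show ?thesis using Pt by simp
        next
          case False then show ?thesis using Suc a assms(2)[of m] by auto
        qed
      qed
    qed
  qed
  have "\<forall>m\<le>k. P m \<longleftrightarrow> t \<le> m"
    using up unfolding t_def by (auto intro: Least_le)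
  then show ?thesis using tk by blast
qed

lemma threshold_down:
  assumes "P 0" "\<And>m. m < k \<Longrightarrow> \<not> P m \<Longrightarrow> \<not> P (Suc m)"
  shows "\<exists>p\<le>k. \<forall>m\<le>k. P m \<longleftrightarrow> m \<le> p"
proof -
  define Q where "Q m = (\<not> P m \<or> m = Suc k)" for m
  have "\<exists>t\<le>Suc k. \<forall>m\<le>Suc k. Q m \<longleftrightarrow> t \<le> m"
  proof (rule threshold_up)
    show "Q (Suc k)" by (simp add: Q_def)
    fix m assume "m < Suc k" "Q m"
    then show "Q (Suc m)" using assms(2)[of m] unfolding Q_def by (cases "m < k") auto
  qed
  then obtain t where t: "t \<le> Suc k" "\<forall>m\<le>Suc k. Q m \<longleftrightarrow> t \<le> m" by blast
  have "\<not> Q 0" using assms(1) by (simp add: Q_def)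
  then have "t \<ge> 1" using t(2)[rule_format, of 0] by auto
  have "\<forall>m\<le>k. P m \<longleftrightarrow> m \<le> t - 1"
  proof (intro allI impI)
    fix m assume "m \<le> k"
    then have "Q m \<longleftrightarrow> \<not> P m" by (simp add: Q_def)
    then show "P m \<longleftrightarrow> m \<le> t - 1" using t(2) \<open>m \<le> k\<close> \<open>t \<ge> 1\<close> by auto
  qed
  moreover have "t - 1 \<le> k" using t by simp
  ultimately show ?thesis by blast
qed

lemma char:
  assumes tds: "is_total_dominating_set {1..4*k+2} path_adj D" and c: "card D = 2*k+2"
  shows "\<exists>p\<le>k. \<exists>t\<le>k. D = Dset k p t"
proof -
  have sub: "D \<subseteq> {1..4*k+2}" using tds unfolding is_total_dominating_set_def by blast
  have fin: "finite D" using sub by (meson finite_atLeastAtMost finite_subset)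
  have "card (gg ` D) = card D" using lb_img[OF tds] card_prod c by simp
  then have inj: "inj_on gg D" by (rule eq_card_imp_inj_on[OF fin])
  have z0: "0 \<notin> D" and z1: "4*k+3 \<notin> D" using sub by auto
  have P0: "4*m \<in> D \<or> 4*m+2 \<in> D" if "m \<le> k" for m
    using nb[OF tds, of "4*m"] that by simp
  have N0: "\<not> (4*m \<in> D \<and> 4*m+2 \<in> D)" for m
    using inj gg0[of m] gg2[of m] by (metis inj_on_contraD add_cancel_left_right zero_neq_numeral)
  have P1: "4*m+1 \<in> D \<or> 4*m+3 \<in> D" if "m \<le> k" for m
  proof -
    have e: "4*m+1+2 = 4*m+3" by simp
    have "4*m+1 \<in> D \<or> 4*m+1+2 \<in> D" by (rule nb[OF tds]) (use that in simp)
    then show ?thesis unfolding e .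
  qed
  have N1: "\<not> (4*m+1 \<in> D \<and> 4*m+3 \<in> D)" for m
  proof -
    have "4*m+1 \<noteq> 4*m+3" by simp
    then show ?thesis using inj gg1[of m] gg3[of m] by (metis inj_on_contraD)
  qed
  have P2: "4*m+2 \<in> D \<or> 4*Suc m \<in> D" if "m < k" for m
  proof -
    have e: "4*m+2+2 = 4*Suc m" by simp
    have "4*m+2 \<in> D \<or> 4*m+2+2 \<in> D" by (rule nb[OF tds]) (use that in simp)
    then show ?thesis unfolding e .
  qed
  have P3: "4*m+3 \<in> D \<or> 4*Suc m+1 \<in> D" if "m < k" for m
  proof -
    have e: "4*m+3+2 = 4*Suc m+1" by simp
    have "4*m+3 \<in> D \<or> 4*m+3+2 \<in> D" by (rule nb[OF tds]) (use that in simp)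
    then show ?thesis unfolding e .
  qed
  have "\<exists>p\<le>k. \<forall>m\<le>k. (4*m+2 \<in> D) \<longleftrightarrow> m \<le> p"
  proof (rule threshold_down)
    show "4*0+2 \<in> D" using P0[of 0] z0 by simp
    fix m assume "m < k" "4*m+2 \<notin> D"
    then show "4*Suc m+2 \<notin> D" using P2[of m] N0[of "Suc m"] by blast
  qed
  then obtain p where p: "p \<le> k" "\<forall>m\<le>k. (4*m+2 \<in> D) \<longleftrightarrow> m \<le> p" by blast
  have "\<exists>t\<le>k. \<forall>m\<le>k. (4*m+1 \<in> D) \<longleftrightarrow> t \<le> m"
  proof (rule threshold_up)
    have "4*k+3 \<notin> D" using z1 .
    then show "4*k+1 \<in> D" using P1[of k] by simp
    fix m assume "m < k" "4*m+1 \<in> D"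
    then show "4*Suc m+1 \<in> D" using P3[of m] N1[of m] by blast
  qed
  then obtain t where t: "t \<le> k" "\<forall>m\<le>k. (4*m+1 \<in> D) \<longleftrightarrow> t \<le> m" by blast
  have "D = Dset k p t"
  proof
    show "D \<subseteq> Dset k p t"
    proof
      fix x assume x: "x \<in> D"
      then have xr: "1 \<le> x" "x \<le> 4*k+2" using sub by auto
      show "x \<in> Dset k p t"
      proof (cases x rule: mod4_cases)
        case (1 q)
        then have "q \<le> k" using xr by simp
        have "4*q+2 \<notin> D" using N0[of q] x 1 by blast
        then have "p < q" using p \<open>q \<le> k\<close> by auto
        then show ?thesis using 1 Dset0[of q k p t] \<open>q \<le> k\<close> by simp
      next
        case (2 q)
        then have "q \<le> k" using xr by simp
        then have "t \<le> q" using t x 2 by auto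
        then show ?thesis using 2 Dset1[of q k p t] \<open>q \<le> k\<close> by simp
      next
        case (3 q)
        then have "q \<le> k" using xr by simp
        then have "q \<le> p" using p x 3 by auto
        then show ?thesis using 3 Dset2[of q k p t] by simp
      next
        case (4 q)
        then have "q \<le> k" using xr by simp
        have "4*q+1 \<notin> D" using N1[of q] x 4 by blast
        then have "q < t" using t \<open>q \<le> k\<close> by auto
        then show ?thesis using 4 Dset3[of q k p t] by simp
      qed
    qed
    show "Dset k p t \<subseteq> D"
    proof
      fix x assume x: "x \<in> Dset k p t"
      show "x \<in> D"
      proof (cases x rule: mod4_cases)
        case (1 q)
        then have "p < q" "q \<le> k" using x Dset0[of q k p t] by auto
        then have "4*q+2 \<notin> D" using p by auto
        then show ?thesis using P0[of q] \<open>q \<le> k\<close> 1 by blast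
      next
        case (2 q)
        then have "t \<le> q" "q \<le> k" using x Dset1[of q k p t] by auto
        then show ?thesis using t 2 by auto
      next
        case (3 q)
        then have "q \<le> p" using x Dset2[of q k p t] by auto
        then show ?thesis using p 3 by auto
      next
        case (4 q)
        then have "q < t" using x Dset3[of q k p t] by auto
        then have "4*q+1 \<notin> D" "q \<le> k" using t by auto
        then show ?thesis using P1[of q] 4 by blast
      qed
    qed
  qed
  then show ?thesis using p t by blast
qed


lemma tdn: "total_domination_number {1..4*k+2} path_adj = 2*k+2"
  unfolding total_domination_number_def
proof (rule Least_equality)
  show "\<exists>D. is_total_dominating_set {1..4 * k + 2} path_adj D \<and> card D = 2 * k + 2"
    using Dset_tds[of 0 k 0] card_Dset[of 0 k 0] by (auto simp: path_vertices_def)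
  fix y assume "\<exists>D. is_total_dominating_set {1..4 * k + 2} path_adj D \<and> card D = y"
  then show "2*k+2 \<le> y" using lb_card by blast
qed

lemma gts: "gamma_t_sets {1..4*k+2} path_adj = (\<lambda>(p,t). Dset k p t) ` ({..k}\<times>{..k})"
proof
  show "gamma_t_sets {1..4*k+2} path_adj \<subseteq> (\<lambda>(p,t). Dset k p t) ` ({..k}\<times>{..k})"
  proof
    fix D assume "D \<in> gamma_t_sets {1..4*k+2} path_adj"
    then have "is_total_dominating_set {1..4*k+2} path_adj D" "card D = 2*k+2"
      unfolding gamma_t_sets_def tdn by auto
    then obtain p t where "p \<le> k" "t \<le> k" "D = Dset k p t" using char by blast
    then show "D \<in> (\<lambda>(p,t). Dset k p t) ` ({..k}\<times>{..k})" by auto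
  qed
  show "(\<lambda>(p,t). Dset k p t) ` ({..k}\<times>{..k}) \<subseteq> gamma_t_sets {1..4*k+2} path_adj"
    using Dset_tds card_Dset unfolding gamma_t_sets_def tdn by (auto simp: path_vertices_def)
qed

lemma injF: "inj_on (\<lambda>(p,t). Dset k p t) ({..k}\<times>{..k})"
proof (rule inj_onI, clarify)
  fix p t p' t' assume a: "p \<le> k" "t \<le> k" "p' \<le> k" "t' \<le> k" "Dset k p t = Dset k p' t'"
  have "4*p+2 \<in> Dset k p t" "4*p'+2 \<in> Dset k p' t'" using Dset2[of p k p t] Dset2[of p' k p' t'] by simp_all
  then have "p \<le> p'" "p' \<le> p" using a(5) Dset2[of p k p' t'] Dset2[of p' k p t] by auto
  have "4*t+1 \<in> Dset k p t" "4*t'+1 \<in> Dset k p' t'" using a Dset1[of t k p t] Dset1[of t' k p' t'] by auto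
  then have "t' \<le> t" "t \<le> t'" using a(5) Dset1[of t k p' t'] Dset1[of t' k p t] by auto
  then show "p = p' \<and> t = t'" using \<open>p \<le> p'\<close> \<open>p' \<le> p\<close> by auto
qed

theorem proposition5p4:
  fixes k :: nat
  shows "tau (path_vertices (4*k+2)) path_adj = (k+1)^2 \<and>
    (\<forall>v\<in>path_vertices (4*k+2).
      TDV (path_vertices (4*k+2)) path_adj v =
        (let q = v div 4 in
          if v mod 4 = 0 then (k+1)*q
          else if v mod 4 = 1 then (k+1)*(q+1)
          else if v mod 4 = 2 then (k+1)*(k+1-q)
          else (k+1)*(k-q)))"
proof
  define F where "F = (\<lambda>(p,t). Dset k p t)"
  define A where "A = {..k} \<times> {..k::nat}"
  have G: "gamma_t_sets (path_vertices (4*k+2)) path_adj = F ` A"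
    unfolding F_def A_def path_vertices_def by (rule gts)
  have inj: "inj_on F A" unfolding F_def A_def by (rule injF)
  show "tau (path_vertices (4*k+2)) path_adj = (k+1)^2"
    unfolding tau_def G using inj by (simp add: card_image A_def card_cartesian_product power2_eq_square)
  show "\<forall>v\<in>path_vertices (4*k+2).
      TDV (path_vertices (4*k+2)) path_adj v =
        (let q = v div 4 in
          if v mod 4 = 0 then (k+1)*q
          else if v mod 4 = 1 then (k+1)*(q+1)
          else if v mod 4 = 2 then (k+1)*(k+1-q)
          else (k+1)*(k-q))"
  proof
    fix v assume v: "v \<in> path_vertices (4*k+2)"
    then have vr: "1 \<le> v" "v \<le> 4*k+2" by (auto simp: path_vertices_def)
    have "{D \<in> F ` A. v \<in> D} = F ` {x \<in> A. v \<in> F x}" by auto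
    moreover have "inj_on F {x \<in> A. v \<in> F x}" using inj by (rule inj_on_subset) auto
    ultimately have T: "TDV (path_vertices (4*k+2)) path_adj v = card {x \<in> A. v \<in> F x}"
      unfolding TDV_def G by (simp add: card_image)
    show "TDV (path_vertices (4*k+2)) path_adj v =
        (let q = v div 4 in
          if v mod 4 = 0 then (k+1)*q
          else if v mod 4 = 1 then (k+1)*(q+1)
          else if v mod 4 = 2 then (k+1)*(k+1-q)
          else (k+1)*(k-q))"
    proof (cases v rule: mod4_cases)
      case (1 q)
      have md: "v mod 4 = 0" "v div 4 = q" using 1 m0 d0 by simp_all
      have qk: "q \<le> k" using 1 vr by simp
      have mem: "v \<in> F (a,b) \<longleftrightarrow> a < q" for a b
        using Dset0[of q k a b] 1 qk unfolding F_def by simp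
      have "{x \<in> A. v \<in> F x} = {..<q} \<times> {..k}" using mem qk unfolding A_def by auto
      then have "card {x \<in> A. v \<in> F x} = q*(k+1)" by (simp add: card_cartesian_product)
      then show ?thesis using T md by (simp add: Let_def)
    next
      case (2 q)
      have md: "v mod 4 = 1" "v div 4 = q" using 2 m1 d1 by simp_all
      have qk: "q \<le> k" using 2 vr by simp
      have mem: "v \<in> F (a,b) \<longleftrightarrow> b \<le> q" for a b
        using Dset1[of q k a b] 2 qk unfolding F_def by simp
      have "{x \<in> A. v \<in> F x} = {..k} \<times> {..q}" using mem qk unfolding A_def by auto
      then have "card {x \<in> A. v \<in> F x} = (k+1)*(q+1)" by (simp add: card_cartesian_product)
      then show ?thesis using T md by (simp add: Let_def)
    next
      case (3 q)
      have md: "v mod 4 = 2" "v div 4 = q" using 3 m2 d2 by simp_all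
      have qk: "q \<le> k" using 3 vr by simp
      have mem: "v \<in> F (a,b) \<longleftrightarrow> q \<le> a" for a b
        using Dset2[of q k a b] 3 unfolding F_def by simp
      have "{x \<in> A. v \<in> F x} = {q..k} \<times> {..k}" using mem qk unfolding A_def by auto
      then have "card {x \<in> A. v \<in> F x} = (k+1-q)*(k+1)" by (simp add: card_cartesian_product)
      then show ?thesis using T md by (simp add: Let_def)
    next
      case (4 q)
      have md: "v mod 4 = 3" "v div 4 = q" using 4 m3 d3 by simp_all
      have qk: "q < k" using 4 vr by simp
      have mem: "v \<in> F (a,b) \<longleftrightarrow> q < b" for a b
        using Dset3[of q k a b] 4 unfolding F_def by simp
      have "{x \<in> A. v \<in> F x} = {..k} \<times> {Suc q..k}" using mem qk unfolding A_def by auto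
      then have "card {x \<in> A. v \<in> F x} = (k+1)*(k-q)" by (simp add: card_cartesian_product)
      then show ?thesis using T md by (simp add: Let_def)
    qed
  qed
qed

end
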